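(* Let $(X,T)$ have data distribution $P$, with $T\in\{0,1\}$, and let $\delta\in(0,1/2)$. Suppose $\delta<P(T=t\mid X=x)<1-\delta$ for all $t\in\{0,1\}$ and all $x$. Let $Q(T\mid X)$ be a model that is calibrated relative to $P$, i.e. $P\big(T=1\mid Q(T=1\mid X)=q\big)=q$ for every value $q$ taken by $Q(T=1\mid X)$. Then $\delta<Q(T=t\mid X=x)<1-\delta$ for all $t\in\{0,1\}$ and all $x$.
   Context: $Q(T\mid X)$ is a propensity score model, a conditional distribution over the binary treatment $T$ given features $X$, with $Q(T=0\mid X)=1-Q(T=1\mid X)$. *)

theory Defs
  imports "HOL-Probability.Probability"
begin

text \<open>Conditional probability of the event T = 1 given the random variable Y
  (with values in the measurable space N), as a function on the sample space,
  i.e. a version of P(T = 1 | sigma(Y)).\<close>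
definition cond_prob_T1 ::
  "'a measure \<Rightarrow> ('a \<Rightarrow> bool) \<Rightarrow> ('a \<Rightarrow> 'b) \<Rightarrow> 'b measure \<Rightarrow> 'a \<Rightarrow> real" where
  "cond_prob_T1 M T Y N =
     real_cond_exp M (vimage_algebra (space M) Y N) (indicator {\<omega> \<in> space M. T \<omega>})"

definition binprob :: "('x \<Rightarrow> real) \<Rightarrow> 'x \<Rightarrow> bool \<Rightarrow> real" where
  "binprob q x t = (if t then q x else 1 - q x)"

end

theory Submission
  imports Defs
begin

lemma cp_intA:
  assumes M: "prob_space M" and Y: "Y \<in> measurable M K"
    and T: "T \<in> measurable M (count_space UNIV)" and B: "B \<in> sets K"
  shows "(\<integral>\<omega> \<in> (Y -` B \<inter> space M). indicator {\<omega>\<in>space M. T \<omega>} \<omega> \<partial>M)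
       = (\<integral>\<omega> \<in> (Y -` B \<inter> space M). cond_prob_T1 M T Y K \<omega> \<partial>M)"
proof -
  interpret prob_space M by (rule M)
  have sub: "subalgebra M (vimage_algebra (space M) Y K)"
    unfolding subalgebra_def
    using Y by (auto simp: sets_vimage_algebra2 measurable_space measurable_sets)
  interpret finite_measure_subalgebra M "vimage_algebra (space M) Y K"
    by unfold_locales (rule sub)
  have Tset: "{\<omega>\<in>space M. T \<omega>} = T -` {True} \<inter> space M" by auto
  have Ts: "{\<omega>\<in>space M. T \<omega>} \<in> sets M"
    unfolding Tset by (rule measurable_sets[OF T]) simp
  have int: "integrable M (indicator {\<omega>\<in>space M. T \<omega>} :: 'a \<Rightarrow> real)"
    using Ts by (intro integrable_real_indicator) (auto simp: emeasure_eq_measure)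
  show ?thesis unfolding cond_prob_T1_def
    by (rule real_cond_exp_intA[OF int in_vimage_algebra[OF B]])
qed

lemma null_from_int:
  fixes f g :: "'a \<Rightarrow> real"
  assumes "integrable M f" "integrable M g" "A \<in> sets M"
    and eq: "(\<integral>\<omega> \<in> A. f \<omega> \<partial>M) = (\<integral>\<omega> \<in> A. g \<omega> \<partial>M)"
    and lt: "\<forall>\<omega>\<in>A. f \<omega> < g \<omega>"
  shows "AE \<omega> in M. \<omega> \<notin> A"
proof -
  have i: "integrable M (\<lambda>\<omega>. indicator A \<omega> * (g \<omega> - f \<omega>))"
    using integrable_mult_indicator[OF assms(3) Bochner_Integration.integrable_diff[OF assms(2) assms(1)]] by simp
  have ig: "integrable M (\<lambda>\<omega>. indicator A \<omega> * g \<omega>)" and if': "integrable M (\<lambda>\<omega>. indicator A \<omega> * f \<omega>)"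
    using integrable_mult_indicator[OF assms(3) assms(2)] integrable_mult_indicator[OF assms(3) assms(1)] by auto
  have "(\<integral>\<omega>. indicator A \<omega> * (g \<omega> - f \<omega>) \<partial>M) = (\<integral>\<omega>. indicator A \<omega> * g \<omega> - indicator A \<omega> * f \<omega> \<partial>M)"
    by (simp add: algebra_simps)
  also have "\<dots> = (\<integral>\<omega> \<in> A. g \<omega> \<partial>M) - (\<integral>\<omega> \<in> A. f \<omega> \<partial>M)"
    unfolding set_lebesgue_integral_def using Bochner_Integration.integral_diff[OF ig if'] by simp
  also have "\<dots> = 0" using eq by simp
  finally have z: "(\<integral>\<omega>. indicator A \<omega> * (g \<omega> - f \<omega>) \<partial>M) = 0" .
  have nn: "AE \<omega> in M. 0 \<le> indicator A \<omega> * (g \<omega> - f \<omega>)"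
    using lt by (auto simp: indicator_def less_imp_le)
  have "AE \<omega> in M. indicator A \<omega> * (g \<omega> - f \<omega>) = 0"
    using integral_nonneg_eq_0_iff_AE[OF i nn] z by simp
  then show ?thesis
    by eventually_elim (use lt in \<open>auto simp: indicator_def\<close>)
qed

theorem mainTheorem3:
  fixes M :: "'a measure" and N :: "'x measure"
    and X :: "'a \<Rightarrow> 'x" and T :: "'a \<Rightarrow> bool"
    and e :: "'x \<Rightarrow> real"  \<comment> \<open>true propensity x \<mapsto> P(T=1 | X=x)\<close>
    and Q :: "'x \<Rightarrow> real"  \<comment> \<open>model x \<mapsto> Q(T=1 | X=x)\<close>
    and \<delta> :: real
  assumes M: "prob_space M"
    and X: "X \<in> measurable M N"
    and T: "T \<in> measurable M (count_space UNIV)"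
    and e_meas: "e \<in> borel_measurable N"
    and e_version: "AE \<omega> in M. cond_prob_T1 M T X N \<omega> = e (X \<omega>)"
    and Q_meas: "Q \<in> borel_measurable N"
    and Q_prob: "\<forall>x \<in> space N. 0 \<le> Q x \<and> Q x \<le> 1"
    and delta: "0 < \<delta>" "\<delta> < 1/2"
    and overlap: "\<forall>x \<in> space N. \<forall>t. \<delta> < binprob e x t \<and> binprob e x t < 1 - \<delta>"
    and calibrated: "AE \<omega> in M. cond_prob_T1 M T (\<lambda>\<omega>. Q (X \<omega>)) borel \<omega> = Q (X \<omega>)"
  shows "AE x in distr M N X. \<forall>t. \<delta> < binprob Q x t \<and> binprob Q x t < 1 - \<delta>"
proof -
  interpret prob_space M by (rule M)
  have QX: "(\<lambda>\<omega>. Q (X \<omega>)) \<in> borel_measurable M" using Q_meas X by measurable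
  have eX: "(\<lambda>\<omega>. e (X \<omega>)) \<in> borel_measurable M" using e_meas X by measurable
  have ebd: "\<forall>x\<in>space N. \<delta> < e x \<and> e x < 1 - \<delta>"
    proof
    fix x assume x: "x \<in> space N"
    have "\<delta> < binprob e x True \<and> binprob e x True < 1 - \<delta>" using overlap x by blast
    then show "\<delta> < e x \<and> e x < 1 - \<delta>" by (simp add: binprob_def)
  qed
  have XN: "X \<omega> \<in> space N" if "\<omega> \<in> space M" for \<omega> using measurable_space[OF X that] .
  have iQ: "integrable M (\<lambda>\<omega>. Q (X \<omega>))"
  proof (rule integrable_const_bound[where B=1])
    show "AE \<omega> in M. norm (Q (X \<omega>)) \<le> 1"
    proof (rule AE_I2)
      fix \<omega> assume "\<omega> \<in> space M"
      then have "0 \<le> Q (X \<omega>) \<and> Q (X \<omega>) \<le> 1" using Q_prob XN by blast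
      then show "norm (Q (X \<omega>)) \<le> 1" by simp
    qed
  qed (rule QX)
  have ie: "integrable M (\<lambda>\<omega>. e (X \<omega>))"
  proof (rule integrable_const_bound[where B=1])
    show "AE \<omega> in M. norm (e (X \<omega>)) \<le> 1"
    proof (rule AE_I2)
      fix \<omega> assume "\<omega> \<in> space M"
      then have "\<delta> < e (X \<omega>) \<and> e (X \<omega>) < 1 - \<delta>" using ebd XN by blast
      then show "norm (e (X \<omega>)) \<le> 1" using delta by simp
    qed
  qed (rule eX)
  have chain: "(\<integral>\<omega> \<in> A. Q (X \<omega>) \<partial>M) = (\<integral>\<omega> \<in> A. e (X \<omega>) \<partial>M)"
    if B: "B \<in> sets borel" and A: "A = {\<omega>\<in>space M. Q (X \<omega>) \<in> B}" for A B
  proof -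
    have A1: "A = (\<lambda>\<omega>. Q (X \<omega>)) -` B \<inter> space M" using A by auto
    have B2: "Q -` B \<inter> space N \<in> sets N" using Q_meas B by (rule measurable_sets)
    have A2: "A = X -` (Q -` B \<inter> space N) \<inter> space M"
      using A measurable_space[OF X] by auto
    have AM: "A \<in> sets M" using A1 QX B by (metis measurable_sets)
    have "(\<integral>\<omega> \<in> A. Q (X \<omega>) \<partial>M) = (\<integral>\<omega> \<in> A. cond_prob_T1 M T (\<lambda>\<omega>. Q (X \<omega>)) borel \<omega> \<partial>M)"
      unfolding set_lebesgue_integral_def
      by (rule integral_cong_AE) (use calibrated QX AM in \<open>auto simp: cond_prob_T1_def\<close>)
    also have "\<dots> = (\<integral>\<omega> \<in> A. indicator {\<omega>\<in>space M. T \<omega>} \<omega> \<partial>M)"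
      unfolding A1 by (rule cp_intA[OF M QX T B, symmetric])
    also have "\<dots> = (\<integral>\<omega> \<in> A. cond_prob_T1 M T X N \<omega> \<partial>M)"
      unfolding A2 by (rule cp_intA[OF M X T B2])
    also have "\<dots> = (\<integral>\<omega> \<in> A. e (X \<omega>) \<partial>M)"
      unfolding set_lebesgue_integral_def
      by (rule integral_cong_AE) (use e_version eX AM in \<open>auto simp: cond_prob_T1_def\<close>)
    finally show ?thesis .
  qed
  have lo: "AE \<omega> in M. \<omega> \<notin> {\<omega>\<in>space M. Q (X \<omega>) \<in> {..\<delta>}}"
    apply (rule null_from_int[OF iQ ie])
    using QX apply measurable
    apply (rule chain[of "{..\<delta>}"]; simp)
  proof
    fix \<omega> assume "\<omega> \<in> {\<omega>\<in>space M. Q (X \<omega>) \<in> {..\<delta>}}"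
    then have "\<omega> \<in> space M" "Q (X \<omega>) \<le> \<delta>" by auto
    moreover have "\<delta> < e (X \<omega>)" using ebd XN[OF \<open>\<omega> \<in> space M\<close>] by blast
    ultimately show "Q (X \<omega>) < e (X \<omega>)" by simp
  qed
  have hi: "AE \<omega> in M. \<omega> \<notin> {\<omega>\<in>space M. Q (X \<omega>) \<in> {1-\<delta>..}}"
    apply (rule null_from_int[OF ie iQ])
    using QX apply measurable
    apply (rule chain[of "{1-\<delta>..}", symmetric]; simp)
  proof
    fix \<omega> assume "\<omega> \<in> {\<omega>\<in>space M. Q (X \<omega>) \<in> {1-\<delta>..}}"
    then have "\<omega> \<in> space M" "1 - \<delta> \<le> Q (X \<omega>)" by auto
    moreover have "e (X \<omega>) < 1 - \<delta>" using ebd XN[OF \<open>\<omega> \<in> space M\<close>] by blast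
    ultimately show "e (X \<omega>) < Q (X \<omega>)" by simp
  qed
  have P: "{x \<in> space N. \<forall>t. \<delta> < binprob Q x t \<and> binprob Q x t < 1 - \<delta>} \<in> sets N"
  proof -
    have "{x \<in> space N. \<forall>t. \<delta> < binprob Q x t \<and> binprob Q x t < 1 - \<delta>}
        = {x \<in> space N. \<delta> < Q x \<and> Q x < 1 - \<delta>}"
      by (auto simp: binprob_def all_bool_eq)
    also have "\<dots> \<in> sets N" using Q_meas by measurable
    finally show ?thesis .
  qed
  show ?thesis
    apply (subst AE_distr_iff[OF X P])
    using lo hi AE_space by eventually_elim (auto simp: binprob_def)
qed

end
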